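(* Let $G$ be a finite group, $m\ge2$, $H$ a normal subgroup of $G$ of exponent $m-1$, and $K$ a normal subgroup of $G$ such that $G=HK$ and $M(G,H,K)$ is trivial. If $d^\wedge_m(H,K)=\frac{2p-1}{p^2}$ for some prime $p$, then $p$ divides $|G|$. If moreover $p$ is the smallest prime divisor of $|G|$, then $|H:C_H(K)|=|K:C_K(H)|=p$, and hence $H\ne K$. In particular, if $d^\wedge_m(H,K)=\frac34$, then $|H:C_H(K)|=|K:C_K(H)|=2$.
   Context: All groups are finite; ${}^g x=gxg^{-1}$, $[x,y]=xyx^{-1}y^{-1}$. For normal subgroups $H,K$ of $G$, $H\wedge K$ is the group generated by symbols $h\wedge k$ ($h\in H,k\in K$) subject to $hh'\wedge k=({}^h h'\wedge {}^h k)(h\wedge k)$, $h\wedge kk'=(h\wedge k)({}^k h\wedge {}^k k')$, $y\wedge y=1$ for $y\in H\cap K$; $M(G,H,K)$ is the kernel of the epimorphism $H\wedge K\to[H,K]$, $h\wedge k\mapsto[h,k]$. $d^\wedge_m(H,K)=|\{(h,k)\in H\times K:h^m\wedge k=1\}|/(|H||K|)$. $C_H(K)=\{h\in H: hk=kh\ \forall k\in K\}$ and $C_K(H)$ analogously. *)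

theory Defs
  imports "HOL-Algebra.Algebra"
begin

definition conj_by :: "('a, 'b) monoid_scheme \<Rightarrow> 'a \<Rightarrow> 'a \<Rightarrow> 'a" where
  "conj_by G g x = g \<otimes>\<^bsub>G\<^esub> x \<otimes>\<^bsub>G\<^esub> inv\<^bsub>G\<^esub> g"

definition commutator :: "('a, 'b) monoid_scheme \<Rightarrow> 'a \<Rightarrow> 'a \<Rightarrow> 'a" where
  "commutator G x y = x \<otimes>\<^bsub>G\<^esub> y \<otimes>\<^bsub>G\<^esub> inv\<^bsub>G\<^esub> x \<otimes>\<^bsub>G\<^esub> inv\<^bsub>G\<^esub> y"

text \<open>The nonabelian exterior product H \<and> K as a group given by a presentation.
  A word is a list of letters ((h,k), b), standing for the generator h \<and> k (b = True)
  or its inverse (b = False).  ext_eq is the congruence on words generated by free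
  reduction and the defining relations.\<close>

type_synonym 'a ext_word = "(('a \<times> 'a) \<times> bool) list"

inductive ext_eq :: "('a, 'b) monoid_scheme \<Rightarrow> 'a set \<Rightarrow> 'a set \<Rightarrow> 'a ext_word \<Rightarrow> 'a ext_word \<Rightarrow> bool"
  for G H K where
  ext_refl: "ext_eq G H K w w"
| ext_sym: "ext_eq G H K u v \<Longrightarrow> ext_eq G H K v u"
| ext_trans: "ext_eq G H K u v \<Longrightarrow> ext_eq G H K v w \<Longrightarrow> ext_eq G H K u w"
| ext_cong: "ext_eq G H K u v \<Longrightarrow> ext_eq G H K (a @ u @ b) (a @ v @ b)"
| ext_free: "x \<in> H \<times> K \<Longrightarrow> ext_eq G H K [(x, b), (x, \<not> b)] []"
| ext_rel1: "h \<in> H \<Longrightarrow> h' \<in> H \<Longrightarrow> k \<in> K \<Longrightarrow>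
    ext_eq G H K [((h \<otimes>\<^bsub>G\<^esub> h', k), True)]
      [((conj_by G h h', conj_by G h k), True), ((h, k), True)]"
| ext_rel2: "h \<in> H \<Longrightarrow> k \<in> K \<Longrightarrow> k' \<in> K \<Longrightarrow>
    ext_eq G H K [((h, k \<otimes>\<^bsub>G\<^esub> k'), True)]
      [((h, k), True), ((conj_by G k h, conj_by G k k'), True)]"
| ext_rel3: "y \<in> H \<inter> K \<Longrightarrow> ext_eq G H K [((y, y), True)] []"

definition ext_class :: "('a, 'b) monoid_scheme \<Rightarrow> 'a set \<Rightarrow> 'a set \<Rightarrow> 'a ext_word \<Rightarrow> 'a ext_word set" where
  "ext_class G H K w = {v. ext_eq G H K w v}"

definition ext_prod :: "('a, 'b) monoid_scheme \<Rightarrow> 'a set \<Rightarrow> 'a set \<Rightarrow> 'a ext_word set monoid" where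
  "ext_prod G H K =
    \<lparr> carrier = ext_class G H K ` lists ((H \<times> K) \<times> UNIV),
      monoid.mult = (\<lambda>A B. \<Union>u\<in>A. \<Union>v\<in>B. ext_class G H K (u @ v)),
      monoid.one = ext_class G H K [] \<rparr>"

definition ext_wedge :: "('a, 'b) monoid_scheme \<Rightarrow> 'a set \<Rightarrow> 'a set \<Rightarrow> 'a \<Rightarrow> 'a \<Rightarrow> 'a ext_word set" where
  "ext_wedge G H K h k = ext_class G H K [((h, k), True)]"

text \<open>Evaluation of a word under h \<and> k \<mapsto> [h,k]; this induces the epimorphism
  H \<and> K \<rightarrow> [H,K].\<close>
fun ext_eval :: "('a, 'b) monoid_scheme \<Rightarrow> 'a ext_word \<Rightarrow> 'a" where
  "ext_eval G [] = \<one>\<^bsub>G\<^esub>"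
| "ext_eval G (((h, k), b) # w) =
     (if b then commutator G h k else inv\<^bsub>G\<^esub> (commutator G h k)) \<otimes>\<^bsub>G\<^esub> ext_eval G w"

text \<open>M(G,H,K): the kernel of H \<and> K \<rightarrow> [H,K].\<close>
definition ext_M :: "('a, 'b) monoid_scheme \<Rightarrow> 'a set \<Rightarrow> 'a set \<Rightarrow> 'a ext_word set set" where
  "ext_M G H K = {A \<in> carrier (ext_prod G H K). \<exists>w\<in>A. ext_eval G w = \<one>\<^bsub>G\<^esub>}"

definition d_wedge :: "('a, 'b) monoid_scheme \<Rightarrow> nat \<Rightarrow> 'a set \<Rightarrow> 'a set \<Rightarrow> real" where
  "d_wedge G m H K =
     real (card {(h, k) \<in> H \<times> K. ext_wedge G H K (h [^]\<^bsub>G\<^esub> m) k = \<one>\<^bsub>ext_prod G H K\<^esub>})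
       / (real (card H) * real (card K))"

definition subgroup_exponent :: "('a, 'b) monoid_scheme \<Rightarrow> 'a set \<Rightarrow> nat" where
  "subgroup_exponent G H = (LEAST n. 0 < n \<and> (\<forall>x\<in>H. x [^]\<^bsub>G\<^esub> n = \<one>\<^bsub>G\<^esub>))"

definition centralizer_in :: "('a, 'b) monoid_scheme \<Rightarrow> 'a set \<Rightarrow> 'a set \<Rightarrow> 'a set" where
  "centralizer_in G H K = {h \<in> H. \<forall>k\<in>K. h \<otimes>\<^bsub>G\<^esub> k = k \<otimes>\<^bsub>G\<^esub> h}"

definition sub_index :: "('a, 'b) monoid_scheme \<Rightarrow> 'a set \<Rightarrow> 'a set \<Rightarrow> nat" where
  "sub_index G H C = card {C #>\<^bsub>G\<^esub> h | h. h \<in> H}"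

end

theory Submission
  imports Defs
begin


lemma (in group) cancel1: "x \<in> carrier G \<Longrightarrow> y \<in> carrier G \<Longrightarrow> x \<otimes> (inv x \<otimes> y) = y"
  by (simp add: m_assoc[symmetric])
lemma (in group) cancel2: "x \<in> carrier G \<Longrightarrow> y \<in> carrier G \<Longrightarrow> inv x \<otimes> (x \<otimes> y) = y"
  by (simp add: m_assoc[symmetric])

lemma (in group) comm_id1:
  assumes "h \<in> carrier G" "h' \<in> carrier G" "k \<in> carrier G"
  shows "commutator G (h \<otimes> h') k = commutator G (conj_by G h h') (conj_by G h k) \<otimes> (commutator G h k \<otimes> \<one>)"
  using assms by (simp add: commutator_def conj_by_def m_assoc inv_mult_group cancel1 cancel2)

lemma (in group) comm_id2:
  assumes "h \<in> carrier G" "k' \<in> carrier G" "k \<in> carrier G"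
  shows "commutator G h (k \<otimes> k') = commutator G h k \<otimes> (commutator G (conj_by G k h) (conj_by G k k') \<otimes> \<one>)"
  using assms by (simp add: commutator_def conj_by_def m_assoc inv_mult_group cancel1 cancel2)

lemma (in group) comm_closed: "h \<in> carrier G \<Longrightarrow> k \<in> carrier G \<Longrightarrow> commutator G h k \<in> carrier G"
  by (simp add: commutator_def)

lemma (in group) eval_closed: "set u \<subseteq> (carrier G \<times> carrier G) \<times> UNIV \<Longrightarrow> ext_eval G u \<in> carrier G"
  by (induction u) (auto simp: comm_closed)

lemma (in group) eval_append: "set u \<subseteq> (carrier G \<times> carrier G) \<times> UNIV \<Longrightarrow> set v \<subseteq> (carrier G \<times> carrier G) \<times> UNIV \<Longrightarrow>
  ext_eval G (u @ v) = ext_eval G u \<otimes> ext_eval G v"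
  by (induction u) (auto simp: comm_closed eval_closed m_assoc)

lemma (in group) conj_closed: "h \<in> carrier G \<Longrightarrow> x \<in> carrier G \<Longrightarrow> conj_by G h x \<in> carrier G"
  by (simp add: conj_by_def)

lemma (in group) ext_eq_eval:
  assumes "H \<subseteq> carrier G" "K \<subseteq> carrier G"
  shows "ext_eq G H K u v \<Longrightarrow> (set u \<subseteq> (carrier G \<times> carrier G) \<times> UNIV \<longleftrightarrow> set v \<subseteq> (carrier G \<times> carrier G) \<times> UNIV)
     \<and> (set u \<subseteq> (carrier G \<times> carrier G) \<times> UNIV \<longrightarrow> ext_eval G u = ext_eval G v)"
proof (induction rule: ext_eq.induct)
  case (ext_refl w)
  show ?case by simp
next
  case (ext_sym u v)
  then show ?case by metis
next
  case (ext_trans u v w)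
  then show ?case by metis
next
  case (ext_cong u v a b)
  let ?L = "(carrier G \<times> carrier G) \<times> (UNIV::bool set)"
  have iff: "set (a @ u @ b) \<subseteq> ?L \<longleftrightarrow> set (a @ v @ b) \<subseteq> ?L"
    using ext_cong.IH by auto
  have "ext_eval G (a @ u @ b) = ext_eval G (a @ v @ b)" if As: "set (a @ u @ b) \<subseteq> ?L"
  proof -
    have sa: "set a \<subseteq> ?L" and su: "set u \<subseteq> ?L" and sb: "set b \<subseteq> ?L" using As by auto
    have sv: "set v \<subseteq> ?L" using ext_cong.IH su by blast
    have e: "ext_eval G u = ext_eval G v" using ext_cong.IH su by blast
    have "ext_eval G (a @ u @ b) = ext_eval G a \<otimes> (ext_eval G u \<otimes> ext_eval G b)"
      using sa su sb by (simp add: eval_append)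
    also have "\<dots> = ext_eval G a \<otimes> (ext_eval G v \<otimes> ext_eval G b)" using e by simp
    also have "\<dots> = ext_eval G (a @ v @ b)"
      using sa sv sb by (simp add: eval_append)
    finally show ?thesis .
  qed
  then show ?case using iff by blast
next
  case (ext_free x b)
  obtain h k where x: "x = (h,k)" by (cases x)
  have hk: "h \<in> carrier G" "k \<in> carrier G" using ext_free x assms by auto
  show ?case using hk comm_closed[OF hk] by (cases b) (simp_all add: x)
next
  case (ext_rel1 h h' k)
  then have c: "h \<in> carrier G" "h' \<in> carrier G" "k \<in> carrier G" using assms by auto
  show ?case using c by (simp add: comm_id1 conj_closed comm_closed)
next
  case (ext_rel2 h k k')
  then have c: "h \<in> carrier G" "k \<in> carrier G" "k' \<in> carrier G" using assms by auto
  show ?case using c by (simp add: comm_id2 conj_closed comm_closed)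
next
  case (ext_rel3 y)
  then have c: "y \<in> carrier G" using assms by auto
  show ?case using c by (simp add: commutator_def m_assoc)
qed




lemma (in group) comm_one_iff:
  assumes "h \<in> carrier G" "k \<in> carrier G"
  shows "commutator G h k = \<one> \<longleftrightarrow> h \<otimes> k = k \<otimes> h"
proof -
  have e: "commutator G h k = (h \<otimes> k) \<otimes> inv (k \<otimes> h)"
    using assms by (simp add: commutator_def inv_mult_group m_assoc)
  show ?thesis unfolding e using assms
    by (metis inv_closed m_closed r_inv inv_equality inv_inv)
qed

lemma (in group) cent_subgroup:
  assumes "subgroup H G" "K \<subseteq> carrier G"
  shows "subgroup (centralizer_in G H K) G"
proof (rule subgroupI)
  have HG: "H \<subseteq> carrier G" using assms subgroup.subset by blast
  show "centralizer_in G H K \<subseteq> carrier G" using HG by (auto simp: centralizer_in_def)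
  show "centralizer_in G H K \<noteq> {}"
  proof -
    have "\<one> \<in> centralizer_in G H K"
      using assms subgroup.one_closed[OF assms(1)] by (auto simp: centralizer_in_def)
    then show ?thesis by blast
  qed
  fix a assume a: "a \<in> centralizer_in G H K"
  then have aH: "a \<in> H" and ac: "\<And>k. k \<in> K \<Longrightarrow> a \<otimes> k = k \<otimes> a" by (auto simp: centralizer_in_def)
  have aG: "a \<in> carrier G" using aH HG by auto
  have "\<And>k. k \<in> K \<Longrightarrow> inv a \<otimes> k = k \<otimes> inv a"
  proof -
    fix k assume k: "k \<in> K"
    then have kG: "k \<in> carrier G" using assms by auto
    have "k \<otimes> inv a = inv a \<otimes> (a \<otimes> k) \<otimes> inv a" using aG kG by (simp add: m_assoc[symmetric])
    also have "\<dots> = inv a \<otimes> (k \<otimes> a) \<otimes> inv a" using ac k by simp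
    also have "\<dots> = inv a \<otimes> k" using aG kG by (simp add: m_assoc)
    finally show "inv a \<otimes> k = k \<otimes> inv a" by simp
  qed
  then show "inv a \<in> centralizer_in G H K"
    unfolding centralizer_in_def using subgroup.m_inv_closed[OF assms(1) aH] by blast
  fix b assume b: "b \<in> centralizer_in G H K"
  then have bH: "b \<in> H" and bc: "\<And>k. k \<in> K \<Longrightarrow> b \<otimes> k = k \<otimes> b" by (auto simp: centralizer_in_def)
  have bG: "b \<in> carrier G" using bH HG by auto
  have "\<And>k. k \<in> K \<Longrightarrow> a \<otimes> b \<otimes> k = k \<otimes> (a \<otimes> b)"
  proof -
    fix k assume k: "k \<in> K"
    then have kG: "k \<in> carrier G" using assms by auto
    have "a \<otimes> b \<otimes> k = a \<otimes> (k \<otimes> b)" using aG bG kG bc k by (simp add: m_assoc)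
    also have "\<dots> = k \<otimes> a \<otimes> b" using aG bG kG ac k by (simp add: m_assoc[symmetric])
    finally show "a \<otimes> b \<otimes> k = k \<otimes> (a \<otimes> b)" using aG bG kG by (simp add: m_assoc)
  qed
  then show "a \<otimes> b \<in> centralizer_in G H K"
    unfolding centralizer_in_def using subgroup.m_closed[OF assms(1) aH bH] by blast
qed

lemma (in group) index_mult:
  assumes "subgroup A G" "subgroup B G" "B \<subseteq> A"
  shows "sub_index G A B * card B = card A"
proof -
  interpret A: group "G\<lparr>carrier := A\<rparr>" using subgroup_imp_group assms by blast
  have "subgroup B (G\<lparr>carrier := A\<rparr>)" using subgroup_incl assms by blast
  from A.lagrange[OF this] have "card (rcosets\<^bsub>G\<lparr>carrier := A\<rparr>\<^esub> B) * card B = card A"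
    by (simp add: order_def)
  moreover have "rcosets\<^bsub>G\<lparr>carrier := A\<rparr>\<^esub> B = {B #> h | h. h \<in> A}"
    by (auto simp: RCOSETS_def r_coset_def)
  ultimately show ?thesis by (simp add: sub_index_def)
qed

lemma (in group) card_sub_dvd:
  assumes "subgroup A G"
  shows "card A dvd order G"
  using lagrange[OF assms] by (metis dvd_triv_right)

lemma (in group) index_ge_p:
  assumes fin: "finite (carrier G)" and "subgroup A G" "subgroup B G" "B \<subseteq> A" "B \<noteq> A"
    and p: "Factorial_Ring.prime (p::nat)" and pmin: "\<forall>q::nat. Factorial_Ring.prime q \<longrightarrow> q dvd order G \<longrightarrow> p \<le> q"
  shows "p * card B \<le> card A"
proof -
  let ?i = "sub_index G A B"
  have eq: "?i * card B = card A" using index_mult assms by blast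
  have finA: "finite A" using assms(2) fin subgroup.subset finite_subset by blast
  have "card B \<noteq> card A" using card_subset_eq[OF finA assms(4)] assms(5) by auto
  then have i1: "?i \<noteq> 1" using eq by auto
  have "card A > 0" using finA subgroup.one_closed[OF assms(2)] card_gt_0_iff by blast
  then have i0: "?i > 0" using eq by (metis gr0I mult_0)
  obtain q where q: "Factorial_Ring.prime q" "q dvd ?i" using prime_factor_nat[OF i1] by blast
  have "?i dvd order G" using eq card_sub_dvd[OF assms(2)] by (metis dvd_mult_left)
  then have "q dvd order G" using q dvd_trans by blast
  then have "p \<le> q" using pmin q by blast
  also have "q \<le> ?i" using q i0 dvd_imp_le by blast
  finally show ?thesis using eq by (metis mult_le_mono1)
qed




lemma arith1:
  fixes T n a s p :: nat
  assumes p: "p \<ge> 2" and s: "s > 0" and an: "a \<le> n"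
    and le: "p*T \<le> p*a*s + (n-a)*s" and eq: "p^2*T = (2*p-1)*n*s"
  shows "n \<le> p*a"
proof -
  have "p*(p*T) \<le> p*(p*a*s + (n-a)*s)" using le by simp
  then have "(2*p-1)*n*s \<le> (p*(p*a) + p*(n-a))*s" using eq by (simp add: power2_eq_square algebra_simps)
  then have 1: "(2*p-1)*n \<le> p*(p*a) + p*(n-a)" using s by simp
  have 2: "int ((2*p-1)*n) \<le> int (p*(p*a) + p*(n-a))" using 1 by linarith
  have 3: "(2*int p - 1)*int n \<le> int p*(int p*int a) + int p*(int n - int a)"
    using 2 p an by (simp add: of_nat_diff)
  then have "(int p - 1) * int n \<le> (int p - 1) * (int p * int a)"
    by (simp add: algebra_simps)
  then have "int n \<le> int p * int a" using p by (simp add: mult_le_cancel_left)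
  then show ?thesis by (simp flip: of_nat_mult)
qed




lemma (in group) count_main:
  assumes fin: "finite (carrier G)" and HG: "subgroup H G" and KG: "subgroup K G"
    and p: "Factorial_Ring.prime (p::nat)" and pmin: "\<forall>q::nat. Factorial_Ring.prime q \<longrightarrow> q dvd order G \<longrightarrow> p \<le> q"
    and eq: "p^2 * card {(h, k) \<in> H \<times> K. h \<otimes> k = k \<otimes> h} = (2*p-1) * card H * card K"
  shows "card H = p * card (centralizer_in G H K)"
proof -
  let ?C = "centralizer_in G H K"
  let ?CK = "\<lambda>h. centralizer_in G K {h}"
  let ?T = "card {(h, k) \<in> H \<times> K. h \<otimes> k = k \<otimes> h}"
  have Hc: "H \<subseteq> carrier G" and Kc: "K \<subseteq> carrier G" using HG KG subgroup.subset by auto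
  have finH: "finite H" and finK: "finite K" using Hc Kc fin finite_subset by auto
  have s: "card K > 0" using finK subgroup.one_closed[OF KG] card_gt_0_iff by blast
  have p2: "p \<ge> 2" using p prime_ge_2_nat by blast
  have CH: "?C \<subseteq> H" by (auto simp: centralizer_in_def)
  have Csub: "subgroup ?C G" using cent_subgroup HG Kc by blast
  have finC: "finite ?C" using finH CH finite_subset by blast
  have Sset: "{(h, k) \<in> H \<times> K. h \<otimes> k = k \<otimes> h} = Sigma H ?CK"
    by (auto simp: centralizer_in_def)
  have T: "?T = (\<Sum>h\<in>H. card (?CK h))"
    unfolding Sset using finH finK by (subst card_SigmaI) (auto simp: centralizer_in_def)
  have inC: "\<And>h. h \<in> ?C \<Longrightarrow> ?CK h = K" by (auto simp: centralizer_in_def)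
  have notC: "\<And>h. h \<in> H - ?C \<Longrightarrow> p * card (?CK h) \<le> card K"
  proof -
    fix h assume h: "h \<in> H - ?C"
    have "?CK h \<noteq> K"
    proof
      assume A: "?CK h = K"
      have "\<forall>k\<in>K. h \<otimes> k = k \<otimes> h"
      proof
        fix k assume "k \<in> K"
        then have "k \<in> ?CK h" using A by simp
        then show "h \<otimes> k = k \<otimes> h" by (simp add: centralizer_in_def)
      qed
      then have "h \<in> ?C" using h by (simp add: centralizer_in_def)
      then show False using h by blast
    qed
    moreover have "subgroup (?CK h) G" using cent_subgroup KG h Hc by blast
    moreover have "?CK h \<subseteq> K" by (auto simp: centralizer_in_def)
    ultimately show "p * card (?CK h) \<le> card K"
      using index_ge_p[OF fin KG _ _ _ p pmin] by blast
  qed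
  have "p * ?T = (\<Sum>h\<in>H - ?C. p * card (?CK h)) + (\<Sum>h\<in>?C. p * card (?CK h))"
    unfolding T sum_distrib_left using sum.subset_diff[OF CH finH] by simp
  also have "\<dots> \<le> (\<Sum>h\<in>H - ?C. card K) + (\<Sum>h\<in>?C. p * card K)"
    using notC inC by (intro add_mono sum_mono) auto
  also have "\<dots> = (card H - card ?C) * card K + card ?C * p * card K"
    using finC CH by (simp add: card_Diff_subset)
  finally have le: "p * ?T \<le> p * card ?C * card K + (card H - card ?C) * card K" by (simp add: ac_simps)
  have aln: "card ?C \<le> card H" using card_mono[OF finH CH] .
  have up: "card H \<le> p * card ?C"
    using arith1[OF p2 s aln le] eq by (simp add: mult.assoc)
  have CneH: "?C \<noteq> H"
  proof
    assume CH': "?C = H"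
    then have "?T = card H * card K" unfolding T using inC by simp
    then have "p^2 * (card H * card K) = (2*p-1) * (card H * card K)" using eq by (simp add: mult.assoc)
    moreover have "card H * card K > 0"
      using s finH subgroup.one_closed[OF HG] card_gt_0_iff by fastforce
    ultimately have "p^2 = 2*p-1" by simp
    moreover have "p^2 \<ge> 2*p" using p2 by (simp add: power2_eq_square)
    ultimately show False using p2 by linarith
  qed
  have "p * card ?C \<le> card H" using index_ge_p[OF fin HG Csub CH CneH p pmin] .
  then show ?thesis using up by simp
qed




lemma (in group) exp_pow:
  assumes fin: "finite (carrier G)" and ex: "subgroup_exponent G H = m - 1" and m: "m \<ge> 2"
    and Hc: "H \<subseteq> carrier G" and h: "h \<in> H"
  shows "h [^] m = h"
proof -
  let ?P = "\<lambda>n. 0 < n \<and> (\<forall>x\<in>H. x [^] n = \<one>)"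
  have "?P (order G)" using fin Hc pow_order_eq_1 order_gt_0_iff_finite by blast
  then have "?P (subgroup_exponent G H)" unfolding subgroup_exponent_def by (rule LeastI)
  then have "h [^] (m - 1) = \<one>" using ex h by simp
  moreover have "m = Suc (m - 1)" using m by simp
  ultimately show ?thesis using h Hc
    by (metis nat_pow_Suc l_one subsetD)
qed

lemma (in group) wedge_iff:
  assumes Hc: "H \<subseteq> carrier G" and Kc: "K \<subseteq> carrier G"
    and M: "ext_M G H K = {\<one>\<^bsub>ext_prod G H K\<^esub>}" and h: "h \<in> H" and k: "k \<in> K"
  shows "ext_wedge G H K h k = \<one>\<^bsub>ext_prod G H K\<^esub> \<longleftrightarrow> h \<otimes> k = k \<otimes> h"
proof -
  have hc: "h \<in> carrier G" and kc: "k \<in> carrier G" using Hc Kc h k by auto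
  have one: "\<one>\<^bsub>ext_prod G H K\<^esub> = ext_class G H K []" by (simp add: ext_prod_def)
  have ev: "ext_eval G [((h, k), True)] = commutator G h k"
    using hc kc comm_closed by simp
  show ?thesis
  proof
    assume "ext_wedge G H K h k = \<one>\<^bsub>ext_prod G H K\<^esub>"
    then have "ext_class G H K [((h, k), True)] = ext_class G H K []"
      by (simp add: ext_wedge_def one)
    moreover have "[] \<in> ext_class G H K []" by (simp add: ext_class_def ext_refl)
    ultimately have E: "ext_eq G H K [((h, k), True)] []" unfolding ext_class_def by blast
    have "ext_eval G [((h, k), True)] = ext_eval G []"
      using ext_eq_eval[OF Hc Kc E] hc kc by simp
    then have "commutator G h k = \<one>" using ev by simp
    then show "h \<otimes> k = k \<otimes> h" using comm_one_iff hc kc by blast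
  next
    assume c: "h \<otimes> k = k \<otimes> h"
    have w: "[((h, k), True)] \<in> lists ((H \<times> K) \<times> UNIV)" using h k by simp
    have "ext_class G H K [((h, k), True)] \<in> carrier (ext_prod G H K)"
      using imageI[OF w, of "ext_class G H K"] by (simp add: ext_prod_def)
    moreover have "[((h, k), True)] \<in> ext_class G H K [((h, k), True)]"
      by (simp add: ext_class_def ext_refl)
    moreover have "ext_eval G [((h, k), True)] = \<one>"
      using ev comm_one_iff[OF hc kc] c by simp
    ultimately have "ext_class G H K [((h, k), True)] \<in> ext_M G H K"
      unfolding ext_M_def by (intro CollectI conjI bexI)
    then have "ext_class G H K [((h, k), True)] \<in> {\<one>\<^bsub>ext_prod G H K\<^esub>}"
      by (simp only: M)
    then show "ext_wedge G H K h k = \<one>\<^bsub>ext_prod G H K\<^esub>"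
      unfolding ext_wedge_def by (rule singletonD)
  qed
qed


lemma real_eq_to_nat:
  fixes T n s p :: nat
  assumes "real T / (real n * real s) = (2 * real p - 1) / (real p)^2"
    and "n > 0" "s > 0" "p > 0"
  shows "p^2 * T = (2*p-1) * n * s"
proof -
  have "real T * (real p)^2 = (2 * real p - 1) * (real n * real s)"
    using assms by (simp add: frac_eq_eq)
  moreover have "real (2*p-1) = 2 * real p - 1" using assms(4) by (simp add: of_nat_diff)
  ultimately have "real (p^2 * T) = real ((2*p-1) * n * s)"
    by (simp add: algebra_simps)
  then show ?thesis using of_nat_eq_iff by blast
qed

theorem mainTheorem11:
  fixes G :: "('a, 'b) monoid_scheme" and H K :: "'a set" and m :: nat
  assumes "group G" and "finite (carrier G)" and "m \<ge> 2"
    and "H \<lhd> G" and "K \<lhd> G"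
    and "subgroup_exponent G H = m - 1"
    and "H <#>\<^bsub>G\<^esub> K = carrier G"
    and "ext_M G H K = {\<one>\<^bsub>ext_prod G H K\<^esub>}"
  shows "(\<forall>p::nat. Factorial_Ring.prime p \<longrightarrow> d_wedge G m H K = (2 * real p - 1) / (real p)\<^sup>2 \<longrightarrow>
            p dvd order G \<and>
            ((\<forall>q::nat. Factorial_Ring.prime q \<longrightarrow> q dvd order G \<longrightarrow> p \<le> q) \<longrightarrow>
              sub_index G H (centralizer_in G H K) = p \<and>
              sub_index G K (centralizer_in G K H) = p \<and> H \<noteq> K))
      \<and> (d_wedge G m H K = 3 / 4 \<longrightarrow>
            sub_index G H (centralizer_in G H K) = 2 \<and>
            sub_index G K (centralizer_in G K H) = 2)"
proof -
  interpret group G by fact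
  note fin = assms(2)
  have HG: "subgroup H G" and KG: "subgroup K G" using assms(4,5) normal_imp_subgroup by auto
  have Hc: "H \<subseteq> carrier G" and Kc: "K \<subseteq> carrier G" using HG KG subgroup.subset by auto
  have finH: "finite H" and finK: "finite K" using Hc Kc fin finite_subset by auto
  have n0: "card H > 0" using finH subgroup.one_closed[OF HG] card_gt_0_iff by blast
  have s0: "card K > 0" using finK subgroup.one_closed[OF KG] card_gt_0_iff by blast
  let ?S = "{(h, k) \<in> H \<times> K. h \<otimes>\<^bsub>G\<^esub> k = k \<otimes>\<^bsub>G\<^esub> h}"
  let ?S' = "{(k, h) \<in> K \<times> H. k \<otimes>\<^bsub>G\<^esub> h = h \<otimes>\<^bsub>G\<^esub> k}"
  have Seq: "{(h, k) \<in> H \<times> K. ext_wedge G H K (h [^]\<^bsub>G\<^esub> m) k = \<one>\<^bsub>ext_prod G H K\<^esub>} = ?S"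
  proof -
    have "\<And>h k. h \<in> H \<Longrightarrow> k \<in> K \<Longrightarrow>
        ext_wedge G H K (h [^]\<^bsub>G\<^esub> m) k = \<one>\<^bsub>ext_prod G H K\<^esub> \<longleftrightarrow> h \<otimes>\<^bsub>G\<^esub> k = k \<otimes>\<^bsub>G\<^esub> h"
      using exp_pow[OF fin assms(6,3) Hc] wedge_iff[OF Hc Kc assms(8)] by simp
    then show ?thesis by auto
  qed
  have d: "d_wedge G m H K = real (card ?S) / (real (card H) * real (card K))"
    unfolding d_wedge_def Seq by simp
  have swap: "card ?S' = card ?S"
  proof -
    have "?S' = prod.swap ` ?S" by (auto simp: image_iff)
    then show ?thesis by (simp add: card_image)
  qed
  have P: "\<forall>p::nat. Factorial_Ring.prime p \<longrightarrow> d_wedge G m H K = (2 * real p - 1) / (real p)\<^sup>2 \<longrightarrow>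
            p dvd order G \<and>
            ((\<forall>q::nat. Factorial_Ring.prime q \<longrightarrow> q dvd order G \<longrightarrow> p \<le> q) \<longrightarrow>
              sub_index G H (centralizer_in G H K) = p \<and>
              sub_index G K (centralizer_in G K H) = p \<and> H \<noteq> K)"
  proof (intro allI impI)
    fix p :: nat
    assume p: "Factorial_Ring.prime p" and dp: "d_wedge G m H K = (2 * real p - 1) / (real p)\<^sup>2"
    have p2: "p \<ge> 2" using p prime_ge_2_nat by blast
    have eq: "p^2 * card ?S = (2*p-1) * card H * card K"
      using real_eq_to_nat[OF dp[unfolded d] n0 s0] p2 by simp
    have "p dvd p^2 * card ?S" by (simp add: power2_eq_square)
    then have "p dvd (2*p-1) * card H * card K" by (simp only: eq)
    then have "p dvd (2*p-1) * (card H * card K)" by (simp only: mult.assoc)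
    then have "p dvd (2*p-1) \<or> p dvd card H \<or> p dvd card K"
      using p by (simp add: prime_dvd_mult_iff)
    moreover have "\<not> p dvd (2*p-1)"
    proof
      assume "p dvd (2*p-1)"
      moreover have "p dvd 2*p" by simp
      ultimately have "p dvd (2*p - (2*p-1))" using dvd_diff_nat by blast
      moreover have "2*p - (2*p-1) = 1" using p2 by simp
      ultimately show False using p2 by simp
    qed
    ultimately have pdvd: "p dvd order G"
      using card_sub_dvd[OF HG] card_sub_dvd[OF KG] dvd_trans by blast
    show "p dvd order G \<and>
            ((\<forall>q::nat. Factorial_Ring.prime q \<longrightarrow> q dvd order G \<longrightarrow> p \<le> q) \<longrightarrow>
              sub_index G H (centralizer_in G H K) = p \<and>
              sub_index G K (centralizer_in G K H) = p \<and> H \<noteq> K)"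
    proof (intro conjI impI pdvd)
      assume pmin: "\<forall>q::nat. Factorial_Ring.prime q \<longrightarrow> q dvd order G \<longrightarrow> p \<le> q"
      have cH: "card H = p * card (centralizer_in G H K)"
        using count_main[OF fin HG KG p pmin eq] .
      have eq': "p^2 * card ?S' = (2*p-1) * card K * card H"
        using eq swap by (simp add: ac_simps)
      have cK: "card K = p * card (centralizer_in G K H)"
        using count_main[OF fin KG HG p pmin eq'] .
      have CHs: "subgroup (centralizer_in G H K) G" using cent_subgroup HG Kc by blast
      have CKs: "subgroup (centralizer_in G K H) G" using cent_subgroup KG Hc by blast
      have CH: "centralizer_in G H K \<subseteq> H" and CK: "centralizer_in G K H \<subseteq> K"
        by (auto simp: centralizer_in_def)
      have iH: "sub_index G H (centralizer_in G H K) * card (centralizer_in G H K) = card H"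
        using index_mult[OF HG CHs CH] .
      have iK: "sub_index G K (centralizer_in G K H) * card (centralizer_in G K H) = card K"
        using index_mult[OF KG CKs CK] .
      have aH: "card (centralizer_in G H K) > 0" using cH n0 by auto
      have aK: "card (centralizer_in G K H) > 0" using cK s0 by auto
      show "sub_index G H (centralizer_in G H K) = p" using iH cH aH by simp
      show "sub_index G K (centralizer_in G K H) = p" using iK cK aK by simp
      show "H \<noteq> K"
      proof
        assume HK: "H = K"
        let ?C = "centralizer_in G H H"
        have cH': "card H = p * card ?C" using cH HK by simp
        have finC: "finite ?C" using finH CH HK finite_subset by auto
        have "?C \<noteq> H"
        proof
          assume "?C = H"
          then have "card H = p * card H" using cH' by simp
          then show False using n0 p2 by simp
        qed
        then obtain h where h: "h \<in> H" "h \<notin> ?C" using CH HK by blast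
        let ?D = "centralizer_in G H {h}"
        have Ds: "subgroup ?D G" using cent_subgroup HG h Hc by blast
        have DH: "?D \<subseteq> H" by (auto simp: centralizer_in_def)
        have CD: "?C \<subseteq> ?D" using h by (auto simp: centralizer_in_def)
        have hD: "h \<in> ?D" using h by (auto simp: centralizer_in_def)
        have CD': "?C \<subset> ?D" using CD hD h by blast
        have finD: "finite ?D" using finH DH finite_subset by blast
        have lt: "card ?C < card ?D" using psubset_card_mono[OF finD CD'] .
        have "?D = H"
        proof (rule ccontr)
          assume "?D \<noteq> H"
          then have "p * card ?D \<le> card H" using index_ge_p[OF fin HG Ds DH _ p pmin] by blast
          then have "card ?D \<le> card ?C" using cH' p2 by simp
          then show False using lt by simp
        qed
        then have "\<forall>k\<in>H. h \<otimes>\<^bsub>G\<^esub> k = k \<otimes>\<^bsub>G\<^esub> h"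
        proof (intro ballI)
          fix k assume A: "?D = H" and k: "k \<in> H"
          then have "k \<in> ?D" by simp
          then show "h \<otimes>\<^bsub>G\<^esub> k = k \<otimes>\<^bsub>G\<^esub> h" by (simp add: centralizer_in_def)
        qed
        then have "h \<in> ?C" using h by (simp add: centralizer_in_def)
        then show False using h by blast
      qed
    qed
  qed
  have Q: "d_wedge G m H K = 3 / 4 \<longrightarrow>
            sub_index G H (centralizer_in G H K) = 2 \<and>
            sub_index G K (centralizer_in G K H) = 2"
  proof
    assume d34: "d_wedge G m H K = 3 / 4"
    have pr2: "Factorial_Ring.prime (2::nat)" by simp
    have "d_wedge G m H K = (2 * real (2::nat) - 1) / (real (2::nat))\<^sup>2" using d34 by simp
    then have "2 dvd order G \<and>
            ((\<forall>q::nat. Factorial_Ring.prime q \<longrightarrow> q dvd order G \<longrightarrow> 2 \<le> q) \<longrightarrow>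
              sub_index G H (centralizer_in G H K) = 2 \<and>
              sub_index G K (centralizer_in G K H) = 2 \<and> H \<noteq> K)"
      using P pr2 by blast
    moreover have "\<forall>q::nat. Factorial_Ring.prime q \<longrightarrow> q dvd order G \<longrightarrow> 2 \<le> q"
      using prime_ge_2_nat by blast
    ultimately show "sub_index G H (centralizer_in G H K) = 2 \<and>
            sub_index G K (centralizer_in G K H) = 2" by blast
  qed
  show ?thesis using P Q by blast
qed


end
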